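(* For every $n\in\mathbb{N}$, \[ \mathcal{M}^{(4)}(n)=\min_{1\le s\le t\le n}\mathcal{M}^{(4)}(n,s,t)=\Bigl\lfloor\frac{n^2-28n+245}{216}\Bigr\rfloor-\begin{cases}1,& n \bmod 108\in I,\\ 0,&\text{otherwise},\end{cases} \] where $I=\{0,1,27,28,43,47,48,53,58,63,67,68,69,73,78,83,88,89,93\}$.
   Context: For real $a>0$ and integers $1\le s\le t\le n$, $\mathcal{M}^{(a)}(n,s,t)$ is the number of ordered triples $T=(x,y,x+\lfloor ay\rfloor)\in\{1,\dots,n\}^3$ such that $T\in(\{1,\dots,s\}\cup\{t+1,\dots,n\})^3$ or $T\in\{s+1,\dots,t\}^3$ (monochromatic generalized Schur triples under the coloring $R^sB^{t-s}R^{n-t}$). For $a=4$ the triples are $(x,y,x+4y)$. *)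

theory Defs
  imports Complex_Main
begin

text \<open>Number of monochromatic generalized Schur triples (x, y, x + floor(a y)) in {1..n}^3
  under the colouring R^s B^(t-s) R^(n-t): red = {1..s} \<union> {t+1..n}, blue = {s+1..t}.\<close>
definition schurM :: "real \<Rightarrow> nat \<Rightarrow> nat \<Rightarrow> nat \<Rightarrow> nat" where
  "schurM a n s t = card ({(x, y, z).
      x \<in> {1..n} \<and> y \<in> {1..n} \<and> z \<in> {1..n} \<and>
      int z = int x + \<lfloor>a * real y\<rfloor> \<and>
      ({x, y, z} \<subseteq> {1..s} \<union> {t+1..n} \<or> {x, y, z} \<subseteq> {s+1..t})} :: (nat \<times> nat \<times> nat) set)"

definition schurMmin :: "real \<Rightarrow> nat \<Rightarrow> nat" where
  "schurMmin a n = Min {schurM a n s t | s t. 1 \<le> s \<and> s \<le> t \<and> t \<le> n}"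

end

theory Submission
  imports Defs
begin
definition gt :: "int \<Rightarrow> int" where "gt k = (k div 4) * k - 2 * (k div 4) * (k div 4 + 1)"
definition Fz :: "int \<Rightarrow> int" where "Fz n = (n^2 - 28*n + 245) div 216 - (if n mod 108 \<in> {0,1,27,28,43,47,48,53,58,63,67,68,69,73,78,83,88,89,93} then 1 else 0)"

lemma gt_add4: "gt (k + 4) = gt k + k"
proof -
  have "(k+4) div 4 = k div 4 + 1" by simp
  then show ?thesis unfolding gt_def by (simp add: algebra_simps)
qed

lemma gt_add20: "gt (k + 20) = gt k + 5*k + 40"
proof -
  have "gt (k+20) = gt (((((k+4)+4)+4)+4)+4)" by (simp add: algebra_simps)
  also have "\<dots> = gt k + 5*k + 40" unfolding gt_add4 by simp
  finally show ?thesis .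
qed

lemma gt_shift: "gt k - gt (k - 4*s) = s * (k - 2*s - 2)"
proof -
  define q where "q = k div 4"
  have "(k - 4*s) div 4 = q - s" unfolding q_def by simp
  then have "gt (k - 4*s) = (q - s) * (k - 4*s) - 2 * (q - s) * (q - s + 1)" unfolding gt_def by simp
  moreover have "gt k = q * k - 2 * q * (q+1)" unfolding gt_def q_def by simp
  ultimately show ?thesis by (simp add: algebra_simps)
qed

lemma gt_8: "8 * gt k = k^2 - 4*k + (k mod 4) * (4 - k mod 4)"
proof -
  define q r where "q = k div 4" and "r = k mod 4"
  have k: "k = 4*q + r" unfolding q_def r_def by simp
  have "8*(q*(4*q+r) - 2*q*(q+1)) = (4*q+r)^2 - 4*(4*q+r) + r*(4-r)" by (simp add: algebra_simps power2_eq_square)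
  then show ?thesis unfolding gt_def q_def[symmetric] r_def[symmetric] using k by simp
qed

lemma gt_lo: "k^2 - 4*k \<le> 8 * gt k"
proof -
  have "0 \<le> (k mod 4) * (4 - k mod 4)" by (simp add: pos_mod_bound less_imp_le)
  then show ?thesis using gt_8[of k] by linarith
qed

lemma gt_hi: "8 * gt k \<le> k^2 - 4*k + 4"
proof -
  have r: "0 \<le> k mod 4" "k mod 4 < 4" by auto
  have "(k mod 4) * (4 - k mod 4) \<le> 4"
  proof -
    have "k mod 4 \<in> {0,1,2,3}" using r by auto
    then show ?thesis by auto
  qed
  then show ?thesis using gt_8[of k] by linarith
qed

lemma gt_small: "0 \<le> k \<Longrightarrow> k \<le> 4 \<Longrightarrow> gt k = 0"
proof -
  assume "0 \<le> k" "k \<le> 4"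
  then have "k \<in> {0,1,2,3,4}" by auto
  then show ?thesis unfolding gt_def by auto
qed

lemma gt_nonneg: "0 \<le> k \<Longrightarrow> 0 \<le> gt k"
proof -
  assume k: "0 \<le> k"
  define q where "q = k div 4"
  have q0: "0 \<le> q" using k unfolding q_def by simp
  have "4*q \<le> k" unfolding q_def using div_mult_mod_eq[of k 4] pos_mod_sign[of 4 k] by linarith
  then have "q*k \<ge> q*(4*q)" using q0 by (simp add: mult_left_mono)
  moreover have "q*(q-1) \<ge> 0" using q0 by (cases "q = 0") auto
  ultimately show ?thesis unfolding gt_def q_def[symmetric] by (simp add: algebra_simps)
qed

lemma gt_diff: "b \<le> a \<Longrightarrow> 4 * (gt a - gt b) \<le> (a - b) * a"
proof (cases "a = b")
  case True then show ?thesis by simp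
next
  case False
  assume ab: "b \<le> a"
  have "8 * (gt a - gt b) \<le> (a^2 - 4*a + 4) - (b^2 - 4*b)" unfolding right_diff_distrib using gt_lo[of b] gt_hi[of a] by linarith
  moreover have "(a^2 - 4*a + 4) - (b^2 - 4*b) \<le> 2 * ((a - b) * a)"
  proof -
    have "a - b \<ge> 1" using ab False by simp
    then have "(a-b)*(a-b+4) \<ge> 1*5" by (intro mult_mono) auto
    then show ?thesis by (simp add: algebra_simps power2_eq_square)
  qed
  ultimately show ?thesis by linarith
qed

lemma Fz_shift: "Fz (n + 108) = Fz n + n + 40"
proof -
  have "(n+108)^2 - 28*(n+108) + 245 = (n^2 - 28*n + 245) + (n+40)*216" by (simp add: algebra_simps power2_eq_square)
  then have "((n+108)^2 - 28*(n+108) + 245) div 216 = (n^2 - 28*n + 245) div 216 + (n+40)" by simp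
  moreover have "(n+108) mod 108 = n mod 108" by simp
  ultimately show ?thesis unfolding Fz_def by simp
qed

lemma Fz_upper: "216 * Fz n \<le> n^2 - 28*n + 245"
proof -
  have "216 * ((n^2 - 28*n + 245) div 216) \<le> n^2 - 28*n + 245"
    using div_mult_mod_eq[of "n^2 - 28*n + 245" 216] pos_mod_sign[of 216 "n^2 - 28*n + 245"] by linarith
  then show ?thesis unfolding Fz_def by auto
qed
lemma per_induct[consumes 1, case_names base step]:
  assumes n: "0 \<le> (n::int)"
    and base: "\<And>n. 0 \<le> n \<Longrightarrow> n < 108 \<Longrightarrow> P n"
    and step: "\<And>n. 0 \<le> n \<Longrightarrow> P n \<Longrightarrow> P (n + 108)"
  shows "P n"
proof -
  have "\<forall>n. 0 \<le> n \<and> nat n = m \<longrightarrow> P n" for m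
  proof (induction m rule: less_induct)
    case (less m)
    show ?case
    proof (intro allI impI)
      fix n :: int assume h: "0 \<le> n \<and> nat n = m"
      show "P n"
      proof (cases "n < 108")
        case True then show ?thesis using base h by auto
      next
        case False
        then have "P (n - 108)" using less.IH[of "nat (n - 108)"] h by auto
        then show ?thesis using step[of "n - 108"] False by simp
      qed
    qed
  qed
  then show ?thesis using n by blast
qed

lemma Fz_mono_base: "list_all (\<lambda>n. Fz n \<le> Fz (n+1)) [0..107]"
  by code_simp

lemma Fz_step: assumes "0 \<le> n" shows "Fz n \<le> Fz (n+1)"
  using assms
proof (induction n rule: per_induct)
  case (base n)
  then show ?case using Fz_mono_base by (auto simp: list_all_iff)
next
  case (step n)
  have "Fz (n + 108 + 1) = Fz ((n+1) + 108)" by (simp add: algebra_simps)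
  then show ?case using step Fz_shift[of n] Fz_shift[of "n+1"] by simp
qed

lemma Fz_mono: "0 \<le> n \<Longrightarrow> n \<le> m \<Longrightarrow> Fz n \<le> Fz m"
proof -
  assume n: "0 \<le> n" and nm: "n \<le> m"
  have "\<forall>m. m = n + int k \<longrightarrow> Fz n \<le> Fz m" for k
  proof (induction k)
    case 0 then show ?case by simp
  next
    case (Suc k)
    show ?case
    proof (intro allI impI)
      fix m assume m: "m = n + int (Suc k)"
      have "Fz n \<le> Fz (n + int k)" using Suc by simp
      also have "\<dots> \<le> Fz (n + int k + 1)" using Fz_step n by simp
      finally show "Fz n \<le> Fz m" using m by (simp add: algebra_simps)
    qed
  qed
  then show ?thesis using nm by (metis le_add_diff_inverse nonneg_int_cases diff_ge_0_iff_ge)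
qed

definition chk :: "int \<Rightarrow> bool" where
 "chk n = list_all (\<lambda>s. list_all (\<lambda>u. Fz n \<le> gt s + gt u + gt (n - 5*s - u)) [(n - 60) div 27..(n+140) div 27]) [(5*n - 116) div 27..(5*n+84) div 27]"

lemma chk_all: "list_all chk [0..107]"
  by code_simp

lemma sq_ge: "101 \<le> \<bar>x::int\<bar> \<Longrightarrow> 10201 \<le> x^2"
proof -
  assume h: "101 \<le> \<bar>x\<bar>"
  have "101*101 \<le> \<bar>x\<bar>*\<bar>x\<bar>" using h by (intro mult_mono) auto
  then show ?thesis by (simp add: power2_eq_square)
qed

lemma div_lo: "a \<le> 27 * s \<Longrightarrow> a div 27 \<le> (s::int)"
  using div_mult_mod_eq[of a 27] pos_mod_sign[of 27 a] by linarith

lemma div_hi: "27 * s \<le> a \<Longrightarrow> s \<le> a div (27::int)"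
  using div_mult_mod_eq[of a 27] pos_mod_bound[of 27 a] by linarith

lemma core_base:
  assumes "0 \<le> n" "n < 108"
  shows "Fz n \<le> gt s + gt u + gt (n - 5*s - u)"
proof -
  define w where "w = n - 5*s - u"
  define A where "A = 27*s - 5*n + 16"
  define B where "B = 27*u - n - 40"
  define C where "C = 27*w - n - 40"
  have id: "729*((s^2 - 4*s) + (u^2 - 4*u) + (w^2 - 4*w)) = A^2 + B^2 + C^2 + 27*(n^2 - 28*n - 128)"
    unfolding A_def B_def C_def w_def by (simp add: algebra_simps power2_eq_square)
  have low: "5832 * (gt s + gt u + gt w) \<ge> A^2 + B^2 + C^2 + 27*(n^2 - 28*n - 128)"
  proof -
    have "729*((s^2 - 4*s) + (u^2 - 4*u) + (w^2 - 4*w)) \<le> 729*(8*gt s + 8*gt u + 8*gt w)"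
      using gt_lo[of s] gt_lo[of u] gt_lo[of w] by (intro mult_left_mono) auto
    then show ?thesis using id by simp
  qed
  have up: "5832 * Fz n \<le> 27*(n^2 - 28*n + 245)"
  proof -
    have "27*(216 * Fz n) \<le> 27*(n^2 - 28*n + 245)" using Fz_upper[of n] by (intro mult_left_mono) auto
    then show ?thesis by simp
  qed
  show ?thesis
  proof (cases "\<bar>A\<bar> \<le> 100 \<and> \<bar>B\<bar> \<le> 100")
    case False
    then have "101 \<le> \<bar>A\<bar> \<or> 101 \<le> \<bar>B\<bar>" by auto
    then have "10201 \<le> A^2 \<or> 10201 \<le> B^2" using sq_ge by blast
    moreover have "0 \<le> A^2" "0 \<le> B^2" "0 \<le> C^2" by auto
    ultimately have "A^2 + B^2 + C^2 \<ge> 10201" by linarith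
    then have "5832 * Fz n \<le> 5832 * (gt s + gt u + gt w)"
    proof -
      assume h: "A^2 + B^2 + C^2 \<ge> 10201"
      have "5832 * Fz n \<le> 27*(n^2 - 28*n + 245)" by (rule up)
      also have "\<dots> \<le> 10201 + 27*(n^2 - 28*n - 128)" by (simp add: algebra_simps)
      also have "\<dots> \<le> A^2 + B^2 + C^2 + 27*(n^2 - 28*n - 128)" using h by simp
      also have "\<dots> \<le> 5832 * (gt s + gt u + gt w)" using low unfolding w_def .
      finally show ?thesis .
    qed
    then show ?thesis unfolding w_def by simp
  next
    case True
    then have s1: "(5*n - 116) div 27 \<le> s" and s2: "s \<le> (5*n+84) div 27"
      and u1: "(n - 60) div 27 \<le> u" and u2: "u \<le> (n+140) div 27"
      unfolding A_def B_def by (auto intro!: div_lo div_hi)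
    have "chk n" using chk_all assms by (auto simp: list_all_iff)
    then show ?thesis using s1 s2 u1 u2 unfolding chk_def by (auto simp: list_all_iff)
  qed
qed

lemma core:
  assumes "0 \<le> n"
  shows "Fz n \<le> gt s + gt u + gt (n - 5*s - u)"
  using assms
proof (induction n arbitrary: s u rule: per_induct)
  case (base n) then show ?case using core_base by simp
next
  case (step n s u)
  have "Fz n \<le> gt (s-20) + gt (u-4) + gt (n - 5*(s-20) - (u-4))" using step by blast
  moreover have "gt s = gt (s-20) + 5*(s-20) + 40" using gt_add20[of "s-20"] by simp
  moreover have "gt u = gt (u-4) + (u-4)" using gt_add4[of "u-4"] by simp
  moreover have "gt (n + 108 - 5*s - u) = gt (n - 5*(s-20) - (u-4)) + (n - 5*(s-20) - (u-4))"
    using gt_add4[of "n - 5*(s-20) - (u-4)"] by (simp add: algebra_simps)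
  ultimately show ?case using Fz_shift[of n] by linarith
qed

definition wok :: "int \<Rightarrow> int \<times> int \<Rightarrow> bool" where
  "wok n p = (let s = fst p; u = snd p; w = n - 5*s - u in
     1 \<le> s \<and> 0 \<le> u \<and> 0 \<le> w \<and> u \<le> 4*s + 4 \<and> u \<le> 15*s + 3*w \<and> gt s + gt u + gt w = Fz n)"

definition wtab :: "(int \<times> int) list" where
  "wtab = [(1, 0), (1, 0), (1, 0), (1, 0), (1, 0), (1, 1), (1, 2), (1, 3), (1, 4), (2, 0), (2, 1), (2, 2), (2, 3), (2, 4), (3, 0), (3, 1), (3, 2), (3, 3), (3, 4), (4, 0), (4, 1), (4, 2), (4, 3), (4, 4), (4, 4), (5, 1), (5, 2), (5, 3), (5, 4), (5, 4), (6, 1), (6, 2), (6, 3), (6, 4), (6, 4), (7, 1), (7, 2), (7, 3), (7, 4), (7, 4), (8, 1), (8, 2), (8, 3), (8, 4), (8, 4), (8, 4), (9, 2), (9, 3), (9, 4), (9, 4), (9, 4), (10, 2), (10, 3), (10, 4), (10, 4), (10, 4), (11, 2), (11, 3), (11, 4), (11, 4), (11, 4), (12, 2), (12, 3), (12, 4), (12, 4), (12, 4), (12, 4), (13, 3), (13, 4), (13, 4), (13, 4), (13, 4), (14, 3), (14, 4), (14, 4), (14, 4), (14, 4), (15, 3), (15, 4), (15, 4), (15, 4), (15, 4), (16, 3), (16, 4), (16, 4), (16, 4), (16, 4), (16, 4), (17, 4), (17, 4), (17, 4), (17, 4), (17, 4), (18, 4), (18, 4), (18, 4), (18, 4), (18,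 4), (19, 4), (19, 4), (19, 4), (19, 4), (19, 4), (20, 4), (20, 4), (20, 4), (20, 4), (20, 4)]"

lemma wtab_ok: "list_all (\<lambda>n. wok n (wtab ! nat (n - 5))) [5..112]"
  by code_simp

lemma wit_aux:
  assumes "0 \<le> m"
  shows "\<exists>p. wok (m + 5) p"
  using assms
proof (induction m rule: per_induct)
    case (base m)
    then have "m + 5 \<in> set [5..112]" unfolding set_upto by simp
    then have "wok (m + 5) (wtab ! nat (m + 5 - 5))" using wtab_ok unfolding list_all_iff by blast
    then show ?case by blast
  next
    case (step m)
    then obtain p where p: "wok (m + 5) p" by auto
    obtain s u where su: "p = (s, u)" by (cases p)
    define w where "w = m + 5 - 5*s - u"
    have h: "1 \<le> s" "0 \<le> u" "0 \<le> w" "u \<le> 4*s + 4" "u \<le> 15*s + 3*w" "gt s + gt u + gt w = Fz (m+5)"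
      using p unfolding wok_def su w_def by (auto simp: Let_def)
    have e: "m + 108 + 5 - 5*(s+20) - (u+4) = w + 4" unfolding w_def by simp
    have "gt (s+20) + gt (u+4) + gt (w+4) = Fz (m + 108 + 5)"
    proof -
      have "Fz (m + 108 + 5) = Fz ((m+5) + 108)" by (simp add: algebra_simps)
      also have "\<dots> = Fz (m+5) + (m+5) + 40" by (rule Fz_shift)
      finally show ?thesis using h(6) gt_add20[of s] gt_add4[of u] gt_add4[of w] unfolding w_def by simp
    qed
    then have "wok (m + 108 + 5) (s+20, u+4)" unfolding wok_def Let_def fst_conv snd_conv e using h by simp
    then show ?case by auto
  qed

lemma wit_exists: "5 \<le> n \<Longrightarrow> \<exists>p. wok n p"
  using wit_aux[of "n - 5"] by simp

lemma concave_ok: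
  fixes lo hi u f flo fhi :: int
  assumes "lo \<le> u" "u \<le> hi" "lo < hi"
    and id: "(hi - lo) * f = (u - lo) * fhi + (hi - u) * flo + (hi - lo) * ((u - lo) * (hi - u))"
    and "0 \<le> fhi" "0 \<le> flo"
  shows "0 \<le> f"
proof -
  have "0 \<le> (u - lo) * fhi + (hi - u) * flo + (hi - lo) * ((u - lo) * (hi - u))"
    using assms by (intro add_nonneg_nonneg mult_nonneg_nonneg) auto
  then have "0 \<le> (hi - lo) * f" using id by simp
  then show ?thesis using assms(3) by (simp add: zero_le_mult_iff)
qed

lemma flo_pos:
  fixes s a :: int
  assumes "1 \<le> s" "0 \<le> a"
  shows "0 \<le> 378*s^2 - 18*a*s + 26*a^2 + 702*s - 90*a - 130"
proof -
  have h1: "0 \<le> (12*a - 18*s)^2" by simp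
  have h2: "0 \<le> (40*a - 90)^2" by simp
  have h3: "s \<le> s^2" using assms by (simp add: power2_eq_square)
  have "24*(6*a^2 - 18*a*s + 378*s^2) = (12*a - 18*s)^2 + 8748*s^2" by (simp add: algebra_simps power2_eq_square)
  moreover have "80*(20*a^2 - 90*a + 102) = (40*a-90)^2 + 60" by (simp add: algebra_simps power2_eq_square)
  ultimately show ?thesis using h1 h2 h3 assms by (smt (verit) zero_le_power2)
qed

lemma IIb1:
  fixes s a u :: int
  assumes "1 \<le> s" "0 \<le> a" "4*s + 5 \<le> u" "u \<le> 4*a + 20*s"
  shows "(a+5*s+u)^2 - 28*(a+5*s+u) + 245 \<le> 27*(s^2 - 4*s) + 216*(s*(u - 2*s - 2)) + 27*(a^2 - 4*a)"
proof -
  define F where "F = 27*(s^2 - 4*s) + 216*(s*(u - 2*s - 2)) + 27*(a^2 - 4*a) - ((a+5*s+u)^2 - 28*(a+5*s+u) + 245)"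
  define Fl where "Fl = 378*s^2 - 18*a*s + 26*a^2 + 702*s - 90*a - 130"
  define Fh where "Fh = 3290*s^2 + 614*(a*s) + 2*a^2 + 160*s + 32*a - 245"
  have h: "0 \<le> Fh"
  proof -
    have "0 \<le> a*s" using assms by simp
    moreover have "0 \<le> a^2" by simp
    moreover have "1 \<le> s^2" using assms by (simp add: one_le_power)
    ultimately show ?thesis unfolding Fh_def using assms by linarith
  qed
  have l: "0 \<le> Fl" unfolding Fl_def using flo_pos assms by simp
  have id: "(4*a + 20*s - (4*s+5)) * F = (u - (4*s+5)) * Fh + (4*a + 20*s - u) * Fl
      + (4*a + 20*s - (4*s+5)) * ((u - (4*s+5)) * (4*a + 20*s - u))"
    unfolding F_def Fh_def Fl_def by (simp add: algebra_simps power2_eq_square)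
  have lt: "4*s+5 < 4*a + 20*s" using assms by simp
  have "0 \<le> F" by (rule concave_ok[OF assms(3) assms(4) lt id h l])
  then show ?thesis unfolding F_def by simp
qed

lemma IIb2:
  fixes s u n :: int
  assumes "1 \<le> s" "4*s + 5 \<le> u" "u \<le> 20*s" "0 \<le> n" "n \<le> 5*s + u"
  shows "n^2 - 28*n + 245 \<le> 27*(s^2 - 4*s) + 216*(s*(u - 2*s - 2))"
proof -
  define N where "N = 5*s + u"
  have A: "N^2 - 28*N + 245 \<le> 27*(s^2 - 4*s) + 216*(s*(u - 2*s - 2))"
    using IIb1[of s 0 u] assms unfolding N_def by simp
  have B: "245 \<le> 27*(s^2 - 4*s) + 216*(s*(u - 2*s - 2))"
  proof -
    have "5 \<le> u - 2*s - 2" using assms(1,2) by linarith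
    then have "s*5 \<le> s*(u - 2*s - 2)" using assms(1) by (intro mult_left_mono) auto
    moreover have "-4 \<le> s^2 - 4*s"
    proof -
      have "0 \<le> (s-2)^2" by simp
      then show ?thesis by (simp add: power2_eq_square algebra_simps)
    qed
    moreover define X where "X = s\<^sup>2 - 4 * s"
    moreover define Y where "Y = s * (u - 2 * s - 2)"
    ultimately show ?thesis using assms(1) unfolding X_def[symmetric] Y_def[symmetric] by linarith
  qed
  have C: "n^2 - 28*n \<le> 0 \<or> n^2 - 28*n \<le> N^2 - 28*N"
  proof (cases "n \<le> 28")
    case True
    then have "n*(n-28) \<le> 0" using assms by (simp add: mult_nonneg_nonpos)
    then show ?thesis by (simp add: power2_eq_square algebra_simps)
  next
    case False
    then have "n*(n-28) \<le> N*(N-28)" using assms unfolding N_def by (intro mult_mono) auto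
    then show ?thesis by (simp add: power2_eq_square algebra_simps)
  qed
  show ?thesis using A B C by linarith
qed

lemma arith_lb:
  fixes s t n c2 c3 c4 c5 :: int
  assumes st: "1 \<le> s" "s \<le> t" "t \<le> n"
    and nn: "0 \<le> c2" "0 \<le> c3" "0 \<le> c4" "0 \<le> c5"
    and c25: "c2 + c5 = gt (n - t)"
    and c5a: "n - t - 4*s \<ge> 0 \<Longrightarrow> c5 = gt (n - t - 4*s)"
    and c5b: "n - t - 4*s \<le> 4 \<Longrightarrow> c5 = 0"
    and c3a: "t - 5*s \<ge> 0 \<Longrightarrow> c3 = gt (t - 5*s)"
    and c4a: "n - 5*t \<ge> 0 \<Longrightarrow> c4 = gt (n - 5*t)"
  shows "Fz n \<le> gt s + c2 + c3 + c4"
proof -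
  define u where "u = n - t"
  have gs: "0 \<le> gt s" using st by (intro gt_nonneg) simp
  show ?thesis
  proof (cases "n - 5*t \<ge> 0")
    case True
    have c4: "c4 = gt (n - 5*t)" using c4a True by simp
    have u4: "u \<ge> 4*t" unfolding u_def using True by simp
    have c5: "c5 = gt (u - 4*s)" using c5a u4 st unfolding u_def by simp
    have c2: "c2 = s*(u - 2*s - 2)" using c25 c5 gt_shift[of u s] unfolding u_def by simp
    have core1: "Fz n \<le> gt t + gt 0 + gt (n - 5*t - 0)" using core[of n t 0] st by simp
    have g0: "gt 0 = 0" by (simp add: gt_def)
    have key: "gt t \<le> gt s + c2 + c3"
    proof (cases "t \<le> 2")
      case True
      then have "gt t = 0" using st by (intro gt_small) auto
      then show ?thesis using gs nn by simp
    next
      case False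
      have A: "4 * gt t \<le> 5*s*t + 4*c3"
      proof (cases "t - 5*s \<ge> 0")
        case True
        have "4 * (gt t - gt (t - 5*s)) \<le> (t - (t - 5*s)) * t" by (rule gt_diff) (use st in simp)
        then show ?thesis using c3a True by (simp add: algebra_simps)
      next
        case False
        have "8 * gt t \<le> t^2 - 4*t + 4" by (rule gt_hi)
        moreover have "t^2 - 4*t + 4 \<le> 2*t^2" using st by (simp add: power2_eq_square algebra_simps)
          (smt (verit) mult_le_cancel_left1)
        moreover have "t*t \<le> (5*s)*t" using False st by (intro mult_right_mono) auto
        ultimately show ?thesis using nn by (simp add: power2_eq_square algebra_simps)
      qed
      have B: "5*s*t \<le> 4*c2"
      proof -
        have "s*(4*t - 2*s - 2) \<le> s*(u - 2*s - 2)" using u4 st by (intro mult_left_mono) auto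
        moreover have "0 \<le> s*(11*t - 8*s - 8)" using st False by (intro mult_nonneg_nonneg) auto
        ultimately show ?thesis unfolding c2 by (simp add: algebra_simps)
      qed
      show ?thesis using A B gs by linarith
    qed
    show ?thesis using core1 g0 key c4 by simp
  next
    case False
    show ?thesis
    proof (cases "u \<le> 4*s + 4")
      case True
      have c5: "c5 = 0" using c5b True unfolding u_def by simp
      have c2: "c2 = gt u" using c25 c5 unfolding u_def by simp
      show ?thesis
      proof (cases "t - 5*s \<ge> 0")
        case True
        have "Fz n \<le> gt s + gt u + gt (n - 5*s - u)" using core[of n s u] st by simp
        moreover have "n - 5*s - u = t - 5*s" unfolding u_def by simp
        ultimately show ?thesis using c2 c3a True nn by simp
      next
        case False
        have "Fz (5*s + u) \<le> gt s + gt u + gt (5*s + u - 5*s - u)"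
          using core[of "5*s+u" s u] st unfolding u_def by simp
        moreover have "gt (5*s + u - 5*s - u) = 0" by (simp add: gt_def)
        moreover have "Fz n \<le> Fz (5*s + u)" using False st unfolding u_def by (intro Fz_mono) auto
        ultimately show ?thesis using c2 nn by simp
      qed
    next
      case False
      have c5: "c5 = gt (u - 4*s)" using c5a False unfolding u_def by simp
      have c2: "c2 = s*(u - 2*s - 2)" using c25 c5 gt_shift[of u s] unfolding u_def by simp
      have up: "216 * Fz n \<le> n^2 - 28*n + 245" by (rule Fz_upper)
      have gs8: "s^2 - 4*s \<le> 8 * gt s" by (rule gt_lo)
      show ?thesis
      proof (cases "t - 5*s \<ge> 0")
        case True
        define a where "a = t - 5*s"
        have c3: "c3 = gt a" using c3a True unfolding a_def by simp
        have ga8: "a^2 - 4*a \<le> 8 * gt a" by (rule gt_lo)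
        have n: "n = a + 5*s + u" unfolding a_def u_def by simp
        have "(a+5*s+u)^2 - 28*(a+5*s+u) + 245 \<le> 27*(s^2 - 4*s) + 216*(s*(u - 2*s - 2)) + 27*(a^2 - 4*a)"
          using IIb1[of s a u] True False \<open>\<not> 0 \<le> n - 5*t\<close> st unfolding a_def u_def by simp
        then have "216 * Fz n \<le> 27*(s^2 - 4*s) + 216*c2 + 27*(a^2 - 4*a)" using up n c2 by simp
        moreover have "27*(s^2 - 4*s) \<le> 27*(8 * gt s)" using gs8 by (intro mult_left_mono) auto
        moreover have "27*(a^2 - 4*a) \<le> 27*(8 * gt a)" using ga8 by (intro mult_left_mono) auto
        ultimately have "216 * Fz n \<le> 216 * (gt s + c2 + c3)" unfolding c3
        proof -
          define X where "X = s^2 - 4*s"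
          define Z where "Z = a^2 - 4*a"
          assume "216 * Fz n \<le> 27*(s^2 - 4*s) + 216*c2 + 27*(a^2 - 4*a)" "27*(s^2 - 4*s) \<le> 27*(8 * gt s)" "27*(a^2 - 4*a) \<le> 27*(8 * gt a)"
          then show "216 * Fz n \<le> 216 * (gt s + c2 + gt a)" unfolding X_def[symmetric] Z_def[symmetric] by simp
        qed
        then show ?thesis using nn by simp
      next
        case False
        have "n^2 - 28*n + 245 \<le> 27*(s^2 - 4*s) + 216*(s*(u - 2*s - 2))"
          using IIb2[of s u n] False \<open>\<not> u \<le> 4*s + 4\<close> \<open>\<not> 0 \<le> n - 5*t\<close> st unfolding u_def by simp
        then have "216 * Fz n \<le> 27*(s^2 - 4*s) + 216*c2" using up c2 by simp
        moreover have "27*(s^2 - 4*s) \<le> 27*(8 * gt s)" using gs8 by (intro mult_left_mono) auto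
        moreover define X where "X = s^2 - 4*s"
        ultimately have "216 * Fz n \<le> 216 * (gt s + c2)" using gs unfolding X_def[symmetric] by simp
        then show ?thesis using nn by simp
      qed
    qed
  qed
qed

definition NS :: "int \<Rightarrow> (nat \<times> nat) set" where
  "NS k = {(x, y). 1 \<le> x \<and> 1 \<le> y \<and> int x + 4 * int y \<le> k}"

lemma NS_finite: "finite (NS k)"
proof -
  have "NS k \<subseteq> {0..nat k} \<times> {0..nat k}" unfolding NS_def by auto
  then show ?thesis by (rule finite_subset) simp
qed

lemma NS_empty: "k \<le> 4 \<Longrightarrow> NS k = {}"
  unfolding NS_def by auto

lemma NS_rec:
  assumes "0 \<le> k"
  shows "NS (k + 4) = ((\<lambda>x. (x, 1::nat)) ` {1..nat k}) \<union> ((\<lambda>p. (fst p, snd p + 1)) ` NS k)"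
proof (intro equalityI subsetI)
  fix p assume p: "p \<in> NS (k + 4)"
  obtain x y where xy: "p = (x, y)" by (cases p)
  show "p \<in> ((\<lambda>x. (x, 1::nat)) ` {1..nat k}) \<union> ((\<lambda>p. (fst p, snd p + 1)) ` NS k)"
  proof (cases "y = 1")
    case True
    then show ?thesis using p assms unfolding xy NS_def by auto
  next
    case False
    then have "(x, y - 1) \<in> NS k" using p unfolding xy NS_def by auto
    moreover have "p = (fst (x, y-1), snd (x, y - 1) + 1)" using False p unfolding xy NS_def by auto
    ultimately show ?thesis by blast
  qed
next
  fix p assume "p \<in> ((\<lambda>x. (x, 1::nat)) ` {1..nat k}) \<union> ((\<lambda>p. (fst p, snd p + 1)) ` NS k)"
  then show "p \<in> NS (k + 4)" using assms unfolding NS_def by auto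
qed

lemma card_NS: "0 \<le> k \<Longrightarrow> int (card (NS k)) = gt k"
proof (induction "nat k" arbitrary: k rule: less_induct)
  case less
  show ?case
  proof (cases "k \<le> 4")
    case True
    then show ?thesis using NS_empty[of k] gt_small[of k] less.prems by simp
  next
    case False
    define j where "j = k - 4"
    have j0: "0 \<le> j" using False unfolding j_def by simp
    have IH: "int (card (NS j)) = gt j" using less.hyps[of j] j0 False unfolding j_def by simp
    have k: "k = j + 4" unfolding j_def by simp
    have disj: "((\<lambda>x. (x, 1::nat)) ` {1..nat j}) \<inter> ((\<lambda>p. (fst p, snd p + 1)) ` NS j) = {}" by (auto simp: NS_def)
    have c1: "card ((\<lambda>x. (x, 1::nat)) ` {1..nat j}) = nat j" by (subst card_image) (auto simp: inj_on_def)
    have c2: "card ((\<lambda>p. (fst p, snd p + 1)) ` NS j) = card (NS j)"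
      by (subst card_image) (auto simp: inj_on_def prod_eq_iff)
    have "card (NS k) = nat j + card (NS j)"
      unfolding k NS_rec[OF j0] using disj c1 c2 NS_finite[of j] by (simp add: card_Un_disjoint)
    then show ?thesis using IH j0 gt_add4[of j] k by simp
  qed
qed

definition NSle :: "int \<Rightarrow> nat \<Rightarrow> (nat \<times> nat) set" where
  "NSle k s = {p \<in> NS k. snd p \<le> s}"

lemma card_NSle: "card (NSle k s) + card (NS (k - 4 * int s)) = card (NS k)"
proof -
  have eq: "NS k = NSle k s \<union> ((\<lambda>p. (fst p, snd p + s)) ` NS (k - 4 * int s))"
  proof (intro equalityI subsetI)
    fix p assume p: "p \<in> NS k"
    obtain x y where xy: "p = (x, y)" by (cases p)
    show "p \<in> NSle k s \<union> ((\<lambda>p. (fst p, snd p + s)) ` NS (k - 4 * int s))"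
    proof (cases "y \<le> s")
      case True then show ?thesis using p unfolding xy NSle_def by auto
    next
      case False
      then have "(x, y - s) \<in> NS (k - 4 * int s)" using p unfolding xy NS_def by auto
      moreover have "p = (fst (x, y - s), snd (x, y - s) + s)" using False unfolding xy by auto
      ultimately show ?thesis by blast
    qed
  next
    fix p assume "p \<in> NSle k s \<union> ((\<lambda>p. (fst p, snd p + s)) ` NS (k - 4 * int s))"
    then show "p \<in> NS k" unfolding NSle_def NS_def by auto
  qed
  have disj: "NSle k s \<inter> ((\<lambda>p. (fst p, snd p + s)) ` NS (k - 4 * int s)) = {}"
    unfolding NSle_def NS_def by auto
  have c2: "card ((\<lambda>p. (fst p, snd p + s)) ` NS (k - 4 * int s)) = card (NS (k - 4 * int s))"
    by (subst card_image) (auto simp: inj_on_def prod_eq_iff)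
  have fin: "finite (NSle k s)" unfolding NSle_def using NS_finite[of k] by simp
  show ?thesis using card_Un_disjoint[OF fin finite_imageI[OF NS_finite] disj] c2 eq by simp
qed

definition Tset :: "nat \<Rightarrow> nat \<Rightarrow> nat \<Rightarrow> (nat \<times> nat \<times> nat) set" where
  "Tset n s t = {(x, y, z). x \<in> {1..n} \<and> y \<in> {1..n} \<and> z \<in> {1..n} \<and> z = x + 4*y \<and>
      ({x, y, z} \<subseteq> {1..s} \<union> {t+1..n} \<or> {x, y, z} \<subseteq> {s+1..t})}"

lemma floor4: "\<lfloor>(4::real) * real y\<rfloor> = int (4 * y)"
proof -
  have "(4::real) * real y = real_of_int (int (4 * y))" by simp
  then show ?thesis by (simp only: floor_of_int)
qed

lemma schurM_eq: "schurM 4 n s t = card (Tset n s t)"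
proof -
  have "\<And>x y z::nat. (int z = int x + \<lfloor>(4::real) * real y\<rfloor>) = (z = x + 4*y)"
    unfolding floor4 by linarith
  then show ?thesis unfolding schurM_def Tset_def by simp
qed

lemma Tset_finite: "finite (Tset n s t)"
proof -
  have "Tset n s t \<subseteq> {1..n} \<times> {1..n} \<times> {1..n}" unfolding Tset_def by auto
  then show ?thesis by (rule finite_subset) simp
qed

definition f3 :: "nat \<Rightarrow> nat \<times> nat \<Rightarrow> nat \<times> nat \<times> nat" where
  "f3 c p = (fst p + c, snd p + c, fst p + c + 4*(snd p + c))"
definition f2 :: "nat \<Rightarrow> nat \<times> nat \<Rightarrow> nat \<times> nat \<times> nat" where
  "f2 c p = (fst p + c, snd p, fst p + c + 4*snd p)"

lemma inj_f3: "inj (f3 c)" by (auto simp: inj_def f3_def prod_eq_iff)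
lemma inj_f2: "inj (f2 c)" by (auto simp: inj_def f2_def prod_eq_iff)

lemma card_f3: "card (f3 c ` A) = card A" by (rule card_image) (rule inj_on_subset[OF inj_f3 subset_UNIV])
lemma card_f2: "card (f2 c ` A) = card A" by (rule card_image) (rule inj_on_subset[OF inj_f2 subset_UNIV])

lemma A1_sub: "s \<le> t \<Longrightarrow> t \<le> n \<Longrightarrow> f3 0 ` NS (int s) \<subseteq> Tset n s t"
  unfolding NS_def Tset_def f3_def by auto

lemma A2_sub: "s \<le> t \<Longrightarrow> t \<le> n \<Longrightarrow> f2 t ` NSle (int n - int t) s \<subseteq> Tset n s t"
  unfolding NSle_def NS_def Tset_def f2_def by auto

lemma A3_sub: "s \<le> t \<Longrightarrow> t \<le> n \<Longrightarrow> f3 s ` NS (int t - 5 * int s) \<subseteq> Tset n s t"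
  unfolding NS_def Tset_def f3_def by auto

lemma A4_sub: "s \<le> t \<Longrightarrow> t \<le> n \<Longrightarrow> f3 t ` NS (int n - 5 * int t) \<subseteq> Tset n s t"
  unfolding NS_def Tset_def f3_def by auto

lemma union_card:
  assumes "1 \<le> s" "s \<le> t" "t \<le> n"
  shows "card (f3 0 ` NS (int s) \<union> f2 t ` NSle (int n - int t) s \<union> f3 s ` NS (int t - 5 * int s) \<union> f3 t ` NS (int n - 5 * int t))
    = card (NS (int s)) + card (NSle (int n - int t) s) + card (NS (int t - 5 * int s)) + card (NS (int n - 5 * int t))"
proof -
  define A1 where "A1 = f3 0 ` NS (int s)"
  define A2 where "A2 = f2 t ` NSle (int n - int t) s"
  define A3 where "A3 = f3 s ` NS (int t - 5 * int s)"
  define A4 where "A4 = f3 t ` NS (int n - 5 * int t)"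
  have fin: "finite A1" "finite A2" "finite A3" "finite A4"
    unfolding A1_def A2_def A3_def A4_def NSle_def using NS_finite by auto
  have s1: "A1 \<subseteq> {p. fst p \<le> s \<and> fst (snd p) \<le> s}" unfolding A1_def NS_def f3_def by auto
  have s2: "A2 \<subseteq> {p. fst p > t \<and> fst (snd p) \<le> s}" unfolding A2_def NSle_def NS_def f2_def by auto
  have s3: "A3 \<subseteq> {p. fst (snd p) > s \<and> fst (snd p) \<le> t}" unfolding A3_def NS_def f3_def by auto
  have s4: "A4 \<subseteq> {p. fst (snd p) > t}" unfolding A4_def NS_def f3_def by auto
  have d12: "A1 \<inter> A2 = {}" using s1 s2 assms by fastforce
  have d3: "(A1 \<union> A2) \<inter> A3 = {}" using s1 s2 s3 by fastforce
  have d4: "(A1 \<union> A2 \<union> A3) \<inter> A4 = {}" using s1 s2 s3 s4 assms by fastforce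
  have "card (A1 \<union> A2 \<union> A3 \<union> A4) = card A1 + card A2 + card A3 + card A4"
    using fin d12 d3 d4 by (simp add: card_Un_disjoint)
  then show ?thesis unfolding A1_def A2_def A3_def A4_def card_f3 card_f2 .
qed

lemma lower_card:
  assumes "1 \<le> s" "s \<le> t" "t \<le> n"
  shows "card (NS (int s)) + card (NSle (int n - int t) s) + card (NS (int t - 5 * int s)) + card (NS (int n - 5 * int t)) \<le> schurM 4 n s t"
proof -
  have "f3 0 ` NS (int s) \<union> f2 t ` NSle (int n - int t) s \<union> f3 s ` NS (int t - 5 * int s) \<union> f3 t ` NS (int n - 5 * int t) \<subseteq> Tset n s t"
    using A1_sub[OF assms(2,3)] A2_sub[OF assms(2,3)] A3_sub[OF assms(2,3)] A4_sub[OF assms(2,3)] by (intro Un_least)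
  then show ?thesis unfolding schurM_eq union_card[OF assms, symmetric] by (rule card_mono[OF Tset_finite])
qed

lemma exact_card:
  assumes "1 \<le> s" "s \<le> t" "t \<le> n" "5 * s \<le> t" "n \<le> 4 * t"
  shows "schurM 4 n s t = card (NS (int s)) + card (NSle (int n - int t) s) + card (NS (int t - 5 * int s)) + card (NS (int n - 5 * int t))"
proof -
  have "Tset n s t \<subseteq> f3 0 ` NS (int s) \<union> f2 t ` NSle (int n - int t) s \<union> f3 s ` NS (int t - 5 * int s) \<union> f3 t ` NS (int n - 5 * int t)"
  proof
    fix p assume p: "p \<in> Tset n s t"
    obtain x y z where xyz: "p = (x, y, z)" by (cases p)
    have z: "z = x + 4*y" and x1: "1 \<le> x" and y1: "1 \<le> y" and zn: "z \<le> n"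
      and col: "{x, y, z} \<subseteq> {1..s} \<union> {t+1..n} \<or> {x, y, z} \<subseteq> {s+1..t}"
      using p unfolding xyz Tset_def by auto
    have yt: "y \<le> t" using z zn assms x1 by linarith
    show "p \<in> f3 0 ` NS (int s) \<union> f2 t ` NSle (int n - int t) s \<union> f3 s ` NS (int t - 5 * int s) \<union> f3 t ` NS (int n - 5 * int t)"
    proof (cases "y \<le> s")
      case True
      then have red: "{x, y, z} \<subseteq> {1..s} \<union> {t+1..n}" using col y1 by auto
      show ?thesis
      proof (cases "x \<le> s")
        case True
        then have "z \<le> s" using red z \<open>y \<le> s\<close> assms by auto
        then have "(x, y) \<in> NS (int s)" using x1 y1 z unfolding NS_def by auto
        moreover have "p = f3 0 (x, y)" unfolding xyz f3_def z by simp
        ultimately show ?thesis by blast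
      next
        case False
        then have "x \<ge> t + 1" using red by auto
        then have "(x - t, y) \<in> NSle (int n - int t) s" using y1 z zn \<open>y \<le> s\<close> unfolding NSle_def NS_def by auto
        moreover have "p = f2 t (x - t, y)" unfolding xyz f2_def z using \<open>x \<ge> t + 1\<close> by simp
        ultimately show ?thesis by blast
      qed
    next
      case False
      then have blue: "{x, y, z} \<subseteq> {s+1..t}" using col yt by auto
      then have "(x - s, y - s) \<in> NS (int t - 5 * int s)" using False z unfolding NS_def by auto
      moreover have "p = f3 s (x - s, y - s)" unfolding xyz f3_def z using blue False by auto
      ultimately show ?thesis by blast
    qed
  qed
  moreover have "f3 0 ` NS (int s) \<union> f2 t ` NSle (int n - int t) s \<union> f3 s ` NS (int t - 5 * int s) \<union> f3 t ` NS (int n - 5 * int t) \<subseteq> Tset n s t"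
    using A1_sub[OF assms(2,3)] A2_sub[OF assms(2,3)] A3_sub[OF assms(2,3)] A4_sub[OF assms(2,3)] by (intro Un_least)
  ultimately show ?thesis unfolding schurM_eq union_card[OF assms(1-3), symmetric] by (metis subset_antisym)
qed

lemma lower_main:
  assumes "1 \<le> s" "s \<le> t" "t \<le> n"
  shows "Fz (int n) \<le> int (schurM 4 n s t)"
proof -
  define c2 where "c2 = int (card (NSle (int n - int t) s))"
  define c3 where "c3 = int (card (NS (int t - 5 * int s)))"
  define c4 where "c4 = int (card (NS (int n - 5 * int t)))"
  define c5 where "c5 = int (card (NS (int n - int t - 4 * int s)))"
  have gs: "int (card (NS (int s))) = gt (int s)" by (rule card_NS) simp
  have "Fz (int n) \<le> gt (int s) + c2 + c3 + c4"
  proof (rule arith_lb[of "int s" "int t" "int n" c2 c3 c4 c5])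
    show "1 \<le> int s" "int s \<le> int t" "int t \<le> int n" using assms by auto
    show "0 \<le> c2" "0 \<le> c3" "0 \<le> c4" "0 \<le> c5" unfolding c2_def c3_def c4_def c5_def by auto
    have "card (NSle (int n - int t) s) + card (NS (int n - int t - 4 * int s)) = card (NS (int n - int t))"
      by (rule card_NSle)
    moreover have "int (card (NS (int n - int t))) = gt (int n - int t)" using assms by (intro card_NS) simp
    ultimately show "c2 + c5 = gt (int n - int t)" unfolding c2_def c5_def by linarith
    show "int n - int t - 4 * int s \<ge> 0 \<Longrightarrow> c5 = gt (int n - int t - 4 * int s)"
      unfolding c5_def by (rule card_NS)
    show "int n - int t - 4 * int s \<le> 4 \<Longrightarrow> c5 = 0"
      unfolding c5_def using NS_empty by simp
    show "int t - 5 * int s \<ge> 0 \<Longrightarrow> c3 = gt (int t - 5 * int s)"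
      unfolding c3_def by (rule card_NS)
    show "int n - 5 * int t \<ge> 0 \<Longrightarrow> c4 = gt (int n - 5 * int t)"
      unfolding c4_def by (rule card_NS)
  qed
  also have "\<dots> \<le> int (schurM 4 n s t)"
    using lower_card[OF assms] gs unfolding c2_def c3_def c4_def by linarith
  finally show ?thesis .
qed

lemma witness_main:
  assumes "1 \<le> n"
  shows "\<exists>s t. 1 \<le> s \<and> s \<le> t \<and> t \<le> n \<and> int (schurM 4 n s t) = Fz (int n)"
proof (cases "n \<le> 4")
  case True
  have "Tset n 1 1 = {}" using True unfolding Tset_def by auto
  then have "schurM 4 n 1 1 = 0" unfolding schurM_eq by simp
  moreover have "Fz (int n) = 0"
  proof -
    have "n \<in> {1,2,3,4}" using True assms by auto
    then show ?thesis unfolding Fz_def by auto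
  qed
  ultimately show ?thesis using assms by auto
next
  case False
  then obtain p where p: "wok (int n) p" using wit_exists[of "int n"] by auto
  obtain s u where su: "p = (s, u)" by (cases p)
  define w where "w = int n - 5*s - u"
  have h: "1 \<le> s" "0 \<le> u" "0 \<le> w" "u \<le> 4*s + 4" "u \<le> 15*s + 3*w" "gt s + gt u + gt w = Fz (int n)"
    using p unfolding wok_def su w_def by (auto simp: Let_def)
  define s' where "s' = nat s"
  define t' where "t' = nat (int n - u)"
  have S: "int s' = s" unfolding s'_def using h by simp
  have T: "int t' = int n - u" unfolding t'_def using h w_def by simp
  have c: "1 \<le> s'" "s' \<le> t'" "t' \<le> n" "5 * s' \<le> t'" "n \<le> 4 * t'"
    using S T h w_def by linarith+
  have e: "schurM 4 n s' t' = card (NS (int s')) + card (NSle (int n - int t') s') + card (NS (int t' - 5 * int s')) + card (NS (int n - 5 * int t'))"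
    by (rule exact_card[OF c])
  have e1: "int (card (NS (int s'))) = gt s" using S h by (simp add: card_NS)
  have e4: "card (NS (int n - 5 * int t')) = 0" using c NS_empty by simp
  have "int t' - 5 * int s' = w" using S T w_def by simp
  then have e3: "int (card (NS (int t' - 5 * int s'))) = gt w" using h card_NS[of w] by simp
  have "card (NSle (int n - int t') s') + card (NS (int n - int t' - 4 * int s')) = card (NS (int n - int t'))"
    by (rule card_NSle)
  moreover have "card (NS (int n - int t' - 4 * int s')) = 0" using S T h NS_empty by simp
  moreover have "int (card (NS (int n - int t'))) = gt u" using T h card_NS[of u] by simp
  ultimately have e2: "int (card (NSle (int n - int t') s')) = gt u" by simp
  have "int (schurM 4 n s' t') = Fz (int n)" using e e1 e2 e3 e4 h(6) by simp
  then show ?thesis using c by blast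
qed

lemma rhs_eq:
  "\<lfloor>(real n ^ 2 - 28 * real n + 245) / 216\<rfloor>
     - (if n mod 108 \<in> {0,1,27,28,43,47,48,53,58,63,67,68,69,73,78,83,88,89,93} then 1 else 0) = Fz (int n)"
proof -
  have "(real n ^ 2 - 28 * real n + 245) / 216 = real_of_int (int n ^ 2 - 28 * int n + 245) / real_of_int 216" by simp
  then have f: "\<lfloor>(real n ^ 2 - 28 * real n + 245) / 216\<rfloor> = (int n ^ 2 - 28 * int n + 245) div 216"
    by (simp only: floor_divide_of_int_eq)
  have m: "int n mod 108 = int (n mod 108)" by (simp add: zmod_int)
  have "(n mod 108 \<in> {0,1,27,28,43,47,48,53,58,63,67,68,69,73,78,83,88,89,93}) =
        (int (n mod 108) \<in> {0,1,27,28,43,47,48,53,58,63,67,68,69,73,78,83,88,89,93})" by auto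
  then show ?thesis unfolding Fz_def f m by simp
qed

theorem theorem4p4:
  fixes n :: nat
  assumes "n \<ge> 1"
  shows "int (schurMmin 4 n) =
           \<lfloor>(real n ^ 2 - 28 * real n + 245) / 216\<rfloor>
           - (if n mod 108 \<in> {0,1,27,28,43,47,48,53,58,63,67,68,69,73,78,83,88,89,93} then 1 else 0)"
proof -
  define SS where "SS = {schurM 4 n s t | s t. 1 \<le> s \<and> s \<le> t \<and> t \<le> n}"
  obtain s t where st: "1 \<le> s" "s \<le> t" "t \<le> n" "int (schurM 4 n s t) = Fz (int n)"
    using witness_main[OF assms] by blast
  have fin: "finite SS"
  proof -
    have "SS \<subseteq> (\<lambda>p. schurM 4 n (fst p) (snd p)) ` ({1..n} \<times> {1..n})" unfolding SS_def by force
    then show ?thesis by (rule finite_subset) simp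
  qed
  have "Min SS = schurM 4 n s t"
  proof (rule Min_eqI[OF fin])
    fix y assume "y \<in> SS"
    then obtain s1 t1 where "y = schurM 4 n s1 t1" "1 \<le> s1" "s1 \<le> t1" "t1 \<le> n" unfolding SS_def by blast
    then show "schurM 4 n s t \<le> y" using lower_main[of s1 t1 n] st(4) by simp
  next
    show "schurM 4 n s t \<in> SS" unfolding SS_def using st by blast
  qed
  then have "int (schurMmin 4 n) = Fz (int n)" unfolding schurMmin_def SS_def[symmetric] using st(4) by simp
  then show ?thesis using rhs_eq[of n] by simp
qed

end
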